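(* Let $(D,s,t,k)$ be a reduced instance of Rooted $k$-Distinct Branchings, let $(\hat T,\{B_x\})$ be the $s$-rooted cut decomposition of $D$, and let $\hat P=x_1\dots x_\ell$ be a degenerate path of $\hat T$ with $t\notin V(\hat P)$. Let $Y\subseteq V(\hat P)$ be the set of tails of arcs in $A^0$. If $(D,s,t,k)$ is not a positive instance, then $|Y|<k$.
   Context: Digraphs are finite and without loops; paths are directed. An out-tree (in-tree) is an oriented tree with exactly one vertex of in-degree zero (out-degree zero), its root; an out-branching (in-branching) of $D$ is a spanning out-tree (in-tree). An instance $(D,s,t,k)$ of Rooted $k$-Distinct Branchings ($D$ a digraph, $s,t\in V(D)$, $k$ an integer) is positive if $D$ has an out-branching $T^+$ rooted at $s$ and an in-branching $T^-$ rooted at $t$ with $|A(T^+)\setminus A(T^-)|\ge k$. It is reduced if $D$ has an out-branching rooted at $s$, an in-branching rooted at $t$, and every arc of $D$ lies in some out-branching rooted at $s$ or in some in-branching rooted at $t$. A vertex $v$ is bi-reachable from $r$ if there are two internally vertex-disjoint directed paths from $r$ to $v$. For a digraph $H$ with at least two vertices and $r\in V(H)$ such that every vertex of $H$ is reachable from $r$, the diblock $B_r$ of $r$ in $H$ is the set of all vertices bi-reachable from $r$, together with $r$ and all out-neighbours of $r$. For $x\in B_r\setminus\{r\}$ let $X_x$ be the set of vertices $v\notin B_r$ such that every directed $r$–$v$ path intersects $B_r$ for the last time in $x$; $x$ is a bottleneck of $B_r$ if $X_x\ne\emptyset$. The $r$-rooted cut decomposition $(\hat T,\{B_x\}_{x\in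 V(\hat T)})$ of $H$ is defined recursively: $\hat T$ is a rooted tree with root $r$; the set associated with the root is $B_r$; the children of $r$ are the bottlenecks of $B_r$; for each bottleneck $x$, the subtree rooted at $x$ with its sets is the $x$-rooted cut decomposition of $H[X_x\cup\{x\}]$. $B_x$ is degenerate if $x$ is an internal node of $\hat T$ and $|B_x|=2$. A path $x_1\dots x_\ell$ in $\hat T$ is degenerate if it is a subpath of a root-to-leaf path of $\hat T$ (with $x_{i+1}$ a child of $x_i$) and every $B_{x_i}$ is degenerate. For such a path $\hat P$, $A^0$ is the set of arcs $x_jx_i$ of $D$ with $j>i$. *)

theory Defs
  imports Main
begin

type_synonym 'a dg = "'a set \<times> ('a \<times> 'a) set"

abbreviation verts :: "'a dg \<Rightarrow> 'a set" where "verts G \<equiv> fst G"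
abbreviation arcs :: "'a dg \<Rightarrow> ('a \<times> 'a) set" where "arcs G \<equiv> snd G"

definition wf_digraph :: "'a dg \<Rightarrow> bool" where
  "wf_digraph G \<longleftrightarrow> finite (verts G) \<and> arcs G \<subseteq> verts G \<times> verts G
     \<and> (\<forall>v. (v, v) \<notin> arcs G)"

definition dpath :: "'a dg \<Rightarrow> 'a list \<Rightarrow> 'a \<Rightarrow> 'a \<Rightarrow> bool" where
  "dpath G p u v \<longleftrightarrow> p \<noteq> [] \<and> hd p = u \<and> last p = v \<and> distinct p \<and> set p \<subseteq> verts G
     \<and> (\<forall>i. Suc i < length p \<longrightarrow> (p ! i, p ! Suc i) \<in> arcs G)"

definition out_branching :: "'a dg \<Rightarrow> 'a \<Rightarrow> ('a \<times> 'a) set \<Rightarrow> bool" where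
  "out_branching G r T \<longleftrightarrow> r \<in> verts G \<and> T \<subseteq> arcs G
     \<and> (\<forall>u. (u, r) \<notin> T)
     \<and> (\<forall>v \<in> verts G. v \<noteq> r \<longrightarrow> (\<exists>!u. (u, v) \<in> T))
     \<and> (\<forall>v \<in> verts G. \<exists>p. dpath (verts G, T) p r v)"

definition in_branching :: "'a dg \<Rightarrow> 'a \<Rightarrow> ('a \<times> 'a) set \<Rightarrow> bool" where
  "in_branching G r T \<longleftrightarrow> r \<in> verts G \<and> T \<subseteq> arcs G
     \<and> (\<forall>u. (r, u) \<notin> T)
     \<and> (\<forall>v \<in> verts G. v \<noteq> r \<longrightarrow> (\<exists>!u. (v, u) \<in> T))
     \<and> (\<forall>v \<in> verts G. \<exists>p. dpath (verts G, T) p v r)"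

definition positive_instance :: "'a dg \<Rightarrow> 'a \<Rightarrow> 'a \<Rightarrow> int \<Rightarrow> bool" where
  "positive_instance D s t k \<longleftrightarrow>
     (\<exists>Tp Tm. out_branching D s Tp \<and> in_branching D t Tm \<and> int (card (Tp - Tm)) \<ge> k)"

definition reduced_instance :: "'a dg \<Rightarrow> 'a \<Rightarrow> 'a \<Rightarrow> int \<Rightarrow> bool" where
  "reduced_instance D s t k \<longleftrightarrow>
     (\<exists>T. out_branching D s T) \<and> (\<exists>T. in_branching D t T)
     \<and> (\<forall>a \<in> arcs D. (\<exists>T. out_branching D s T \<and> a \<in> T) \<or> (\<exists>T. in_branching D t T \<and> a \<in> T))"

definition bireachable :: "'a dg \<Rightarrow> 'a \<Rightarrow> 'a \<Rightarrow> bool" where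
  "bireachable H r v \<longleftrightarrow> (\<exists>p q. dpath H p r v \<and> dpath H q r v \<and> p \<noteq> q
     \<and> set p \<inter> set q \<subseteq> {r, v})"

definition diblock :: "'a dg \<Rightarrow> 'a \<Rightarrow> 'a set" where
  "diblock H r = {v \<in> verts H. bireachable H r v} \<union> {r} \<union> {v. (r, v) \<in> arcs H}"

definition Xset :: "'a dg \<Rightarrow> 'a \<Rightarrow> 'a \<Rightarrow> 'a set" where
  "Xset H r x = {v \<in> verts H - diblock H r.
      \<forall>p. dpath H p r v \<longrightarrow> last (filter (\<lambda>y. y \<in> diblock H r) p) = x}"

definition bottleneck :: "'a dg \<Rightarrow> 'a \<Rightarrow> 'a \<Rightarrow> bool" where
  "bottleneck H r x \<longleftrightarrow> x \<in> diblock H r - {r} \<and> Xset H r x \<noteq> {}"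

definition induced :: "'a dg \<Rightarrow> 'a set \<Rightarrow> 'a dg" where
  "induced H S = (S, {(u, v) \<in> arcs H. u \<in> S \<and> v \<in> S})"

text \<open>Nodes of the s-rooted cut decomposition of D: node x together with the digraph H
  whose x-rooted cut decomposition is the subtree at x (so B_x = diblock H x).\<close>
inductive cd_node :: "'a dg \<Rightarrow> 'a \<Rightarrow> 'a \<Rightarrow> 'a dg \<Rightarrow> bool" for D s where
  root: "cd_node D s s D"
| child: "cd_node D s x H \<Longrightarrow> bottleneck H x y \<Longrightarrow> cd_node D s y (induced H (Xset H x y \<union> {y}))"

definition cd_child :: "'a dg \<Rightarrow> 'a \<Rightarrow> 'a \<Rightarrow> 'a \<Rightarrow> bool" where
  "cd_child D s x y \<longleftrightarrow> (\<exists>H. cd_node D s x H \<and> bottleneck H x y)"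

definition cd_degenerate :: "'a dg \<Rightarrow> 'a \<Rightarrow> 'a \<Rightarrow> bool" where
  "cd_degenerate D s x \<longleftrightarrow> (\<exists>H. cd_node D s x H \<and> (\<exists>y. bottleneck H x y) \<and> card (diblock H x) = 2)"

definition degenerate_path :: "'a dg \<Rightarrow> 'a \<Rightarrow> 'a list \<Rightarrow> bool" where
  "degenerate_path D s xs \<longleftrightarrow> xs \<noteq> []
     \<and> (\<forall>i. Suc i < length xs \<longrightarrow> cd_child D s (xs ! i) (xs ! Suc i))
     \<and> (\<forall>i < length xs. cd_degenerate D s (xs ! i))"

definition A0_tails :: "'a dg \<Rightarrow> 'a list \<Rightarrow> 'a set" where
  "A0_tails D xs = {xs ! j | j. j < length xs \<and> (\<exists>i < j. (xs ! j, xs ! i) \<in> arcs D)}"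

end

theory Submission
  imports Defs
begin


definition rr :: "('a \<times> 'a) set \<Rightarrow> 'a set \<Rightarrow> ('a \<times> 'a) set" where
  "rr E S = {p \<in> E. fst p \<in> S \<and> snd p \<in> S}"

lemma rr_iff[simp]: "(u,w) \<in> rr E S \<longleftrightarrow> (u,w) \<in> E \<and> u \<in> S \<and> w \<in> S"
  by (auto simp: rr_def)

lemma reach_mono: "(a,b) \<in> (rr E S1)\<^sup>* \<Longrightarrow> S1 \<subseteq> S2 \<Longrightarrow> (a,b) \<in> (rr E S2)\<^sup>*"
proof -
  assume "(a,b) \<in> (rr E S1)\<^sup>*" "S1 \<subseteq> S2"
  moreover have "rr E S1 \<subseteq> rr E S2" using \<open>S1 \<subseteq> S2\<close> by (auto simp: rr_def)
  ultimately show ?thesis using rtrancl_mono by blast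
qed

lemma reach_monoE: "(a,b) \<in> (rr E1 S1)\<^sup>* \<Longrightarrow> E1 \<subseteq> E2 \<Longrightarrow> S1 \<subseteq> S2 \<Longrightarrow> (a,b) \<in> (rr E2 S2)\<^sup>*"
proof -
  assume "(a,b) \<in> (rr E1 S1)\<^sup>*" "S1 \<subseteq> S2" "E1 \<subseteq> E2"
  moreover have "rr E1 S1 \<subseteq> rr E2 S2" using \<open>S1 \<subseteq> S2\<close> \<open>E1 \<subseteq> E2\<close> by (auto simp: rr_def)
  ultimately show ?thesis using rtrancl_mono by blast
qed

lemma reach_out: "(a,b) \<in> (rr E S)\<^sup>* \<Longrightarrow> a = b \<or> (a \<in> S \<and> b \<in> S)"
  by (induct rule: rtrancl_induct) auto

lemma reach_FV:
  assumes "(a,b) \<in> (rr E S)\<^sup>*" "a \<noteq> c"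
  shows "(a,b) \<in> (rr E (S-{c}))\<^sup>* \<or> (\<exists>u. (a,u) \<in> (rr E (S-{c}))\<^sup>* \<and> (u,c) \<in> rr E S)"
  using assms(1)
proof (induct rule: rtrancl_induct)
  case base then show ?case by simp
next
  case (step w b)
  from step(3) show ?case
  proof
    assume h: "(a, w) \<in> (rr E (S - {c}))\<^sup>*"
    show ?thesis
    proof (cases "b = c")
      case True then show ?thesis using h step by blast
    next
      case False
      have "w \<noteq> c" using reach_out[OF h] assms(2) by auto
      then have "(w,b) \<in> rr E (S-{c})" using step False by auto
      then show ?thesis using h by (meson rtrancl.rtrancl_into_rtrancl)
    qed
  qed blast
qed

lemma reach_LV:
  assumes "(a,b) \<in> (rr E S)\<^sup>*" "b \<noteq> c"
  shows "(a,b) \<in> (rr E (S-{c}))\<^sup>* \<or> (\<exists>w. (c,w) \<in> rr E S \<and> (w,b) \<in> (rr E (S-{c}))\<^sup>*)"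
  using assms(1)
proof (induct rule: converse_rtrancl_induct)
  case base then show ?case by simp
next
  case (step a a')
  show ?case
  proof (cases "a = c")
    case True
    then show ?thesis using step by blast
  next
    case False
    from step(3) show ?thesis
    proof
      assume h: "(a', b) \<in> (rr E (S - {c}))\<^sup>*"
      have "a' \<noteq> c" using reach_out[OF h] assms(2) by auto
      then have "(a,a') \<in> rr E (S-{c})" using step False by auto
      then show ?thesis using h by (meson converse_rtrancl_into_rtrancl)
    qed blast
  qed
qed

lemma reach_leave:
  assumes "(a,b) \<in> R\<^sup>*" "P a" "\<not> P b"
  shows "\<exists>u w. (a,u) \<in> R\<^sup>* \<and> (u,w) \<in> R \<and> P u \<and> \<not> P w"
  using assms
proof (induct rule: rtrancl_induct)
  case base then show ?case by simp
next
  case (step w b)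
  then show ?case
  proof (cases "P w")
    case True then show ?thesis using step by blast
  next
    case False then show ?thesis using step by blast
  qed
qed

lemma dpath_drop:
  assumes "dpath G p a b" "k < length p"
  shows "dpath G (drop k p) (p!k) b"
  using assms unfolding dpath_def
  by (auto simp: hd_drop_conv_nth last_drop set_drop_subset[THEN subsetD] dest: set_drop_subset[THEN subsetD])

lemma dpath_P2RT:
  assumes "dpath G p a b"
  shows "(a,b) \<in> (rr (arcs G) (set p))\<^sup>*"
proof -
  have ne: "p \<noteq> []" and hd: "hd p = a" and la: "last p = b"
    and ar: "\<forall>i. Suc i < length p \<longrightarrow> (p ! i, p ! Suc i) \<in> arcs G"
    using assms by (auto simp: dpath_def)
  have "\<forall>k. k < length p \<longrightarrow> (p!0, p!k) \<in> (rr (arcs G) (set p))\<^sup>*"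
  proof
    fix k show "k < length p \<longrightarrow> (p!0, p!k) \<in> (rr (arcs G) (set p))\<^sup>*"
    proof (induct k)
      case 0 then show ?case by simp
    next
      case (Suc k)
      show ?case
      proof
        assume "Suc k < length p"
        then have "(p!k, p!Suc k) \<in> rr (arcs G) (set p)" using ar by auto
        then show "(p!0, p!Suc k) \<in> (rr (arcs G) (set p))\<^sup>*"
          using Suc \<open>Suc k < length p\<close> by (meson Suc_lessD rtrancl.rtrancl_into_rtrancl)
      qed
    qed
  qed
  then have "(p!0, p!(length p - 1)) \<in> (rr (arcs G) (set p))\<^sup>*" using ne by simp
  then show ?thesis using ne hd la by (simp add: hd_conv_nth last_conv_nth)
qed

lemma dpath_Cons:
  assumes "dpath G p w b" "v \<notin> set p" "v \<in> verts G" "(v,w) \<in> arcs G"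
  shows "dpath G (v#p) v b"
  using assms unfolding dpath_def
  apply (auto simp: hd_conv_nth)
  subgoal for i by (cases i) (auto simp: hd_conv_nth)
  done

lemma dpath_RT2P:
  assumes "(a,b) \<in> (rr E S)\<^sup>*" "a \<in> S"
  shows "\<exists>p. dpath (S, rr E S) p a b"
  using assms
proof (induct rule: converse_rtrancl_induct)
  case base then show ?case by (auto simp: dpath_def)
next
  case (step a a')
  then obtain p where p: "dpath (S, rr E S) p a' b" by auto
  show ?case
  proof (cases "a \<in> set p")
    case True
    then obtain k where "k < length p" "p!k = a" by (auto simp: in_set_conv_nth)
    then show ?thesis using dpath_drop[OF p] by metis
  next
    case False
    then show ?thesis using dpath_Cons[OF p False] step by auto
  qed
qed

lemma dpath_mono:
  "dpath G p a b \<Longrightarrow> verts G \<subseteq> verts G' \<Longrightarrow> arcs G \<subseteq> arcs G' \<Longrightarrow> dpath G' p a b"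
  unfolding dpath_def by blast



definition Dm :: "'a dg \<Rightarrow> 'a \<Rightarrow> 'a \<Rightarrow> 'a set" where
  "Dm D s x = {v \<in> fst D. v = x \<or> (s,v) \<notin> (rr (snd D) (fst D - {x}))\<^sup>*}"

lemma induced_rr: "induced H S = (S, rr (arcs H) S)"
  by (auto simp: induced_def rr_def)

locale sett =
  fixes D :: "'a dg" and s :: 'a
  assumes wf: "wf_digraph D" and sV: "s \<in> verts D"
    and reach: "\<And>v. v \<in> verts D \<Longrightarrow> (s,v) \<in> (rr (arcs D) (verts D))\<^sup>*"
begin

abbreviation "V \<equiv> verts D"
abbreviation "E \<equiv> arcs D"
abbreviation "Dom \<equiv> Dm D s"

lemma EV: "(u,w) \<in> E \<Longrightarrow> u \<in> V \<and> w \<in> V" using wf by (auto simp: wf_digraph_def)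
lemma noloop: "(u,u) \<notin> E" using wf by (auto simp: wf_digraph_def)

lemma Dom_V: "Dom x \<subseteq> V" by (auto simp: Dm_def)

lemma in_Dom: "v \<in> Dom x \<longleftrightarrow> v \<in> V \<and> (v = x \<or> (s,v) \<notin> (rr E (V - {x}))\<^sup>*)"
  by (auto simp: Dm_def)

lemma Dom_s: "Dom s = V"
  using reach_out by (fastforce simp: in_Dom)

lemma EP: "(u,v) \<in> E \<Longrightarrow> u \<notin> Dom x \<Longrightarrow> v \<in> Dom x \<Longrightarrow> v = x"
proof (rule ccontr)
  assume a: "(u,v) \<in> E" "u \<notin> Dom x" "v \<in> Dom x" "v \<noteq> x"
  then have "u \<in> V" "v \<in> V" using EV[OF a(1)] by auto
  with a have "(s,u) \<in> (rr E (V-{x}))\<^sup>*" "u \<noteq> x" by (auto simp: in_Dom)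
  moreover have "(u,v) \<in> rr E (V-{x})" using a \<open>u \<noteq> x\<close> \<open>v \<in> V\<close> \<open>u \<in> V\<close> by auto
  ultimately have "(s,v) \<in> (rr E (V-{x}))\<^sup>*" by (meson rtrancl.rtrancl_into_rtrancl)
  with a show False by (auto simp: in_Dom)
qed

lemma entry_reach:
  assumes "(u,v) \<in> (rr E T)\<^sup>*" "x \<notin> T" "u \<notin> Dom x" "v \<in> Dom x"
  shows False
proof -
  have "\<forall>b. (u,b) \<in> (rr E T)\<^sup>* \<longrightarrow> b \<notin> Dom x"
  proof (intro allI impI)
    fix b assume "(u,b) \<in> (rr E T)\<^sup>*"
    then show "b \<notin> Dom x"
    proof (induct rule: rtrancl_induct)
      case base then show ?case using assms by simp
    next
      case (step w b)
      then show ?case using EP[of w b x] assms(2) by auto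
    qed
  qed
  then show False using assms by auto
qed

lemma Dom_trans:
  assumes "c \<in> Dom x" shows "Dom c \<subseteq> Dom x"
proof
  fix v assume v: "v \<in> Dom c"
  show "v \<in> Dom x"
  proof (rule ccontr)
    assume nv: "v \<notin> Dom x"
    have vV: "v \<in> V" using v Dom_V by auto
    with nv have r: "(s,v) \<in> (rr E (V-{x}))\<^sup>*" "v \<noteq> x" by (auto simp: in_Dom)
    have cx: "c \<noteq> x" using v nv by auto
    with assms have nc: "(s,c) \<notin> (rr E (V-{x}))\<^sup>*" by (auto simp: in_Dom)
    then have sc: "s \<noteq> c" by auto
    from reach_FV[OF r(1) sc] show False
    proof
      assume h: "(s, v) \<in> (rr E (V - {x} - {c}))\<^sup>*"
      then have "(s, v) \<in> (rr E (V - {c}))\<^sup>*" by (rule reach_mono) auto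
      moreover have "v \<noteq> c" using reach_out[OF h] sc by auto
      ultimately show False using v by (auto simp: in_Dom)
    next
      assume "\<exists>u. (s, u) \<in> (rr E (V - {x} - {c}))\<^sup>* \<and> (u, c) \<in> rr E (V - {x})"
      then obtain u where "(s, u) \<in> (rr E (V - {x} - {c}))\<^sup>*" "(u, c) \<in> rr E (V - {x})" by blast
      then have "(s,c) \<in> (rr E (V-{x}))\<^sup>*"
        by (meson Diff_subset reach_mono rtrancl.rtrancl_into_rtrancl)
      with nc show False by simp
    qed
  qed
qed

lemma RX:
  assumes "x \<in> V" "y \<in> Dom x" "y \<noteq> x"
  shows "(s,x) \<in> (rr E (V-{y}))\<^sup>*"
proof (cases "x = s")
  case True then show ?thesis by simp
next
  case False
  have ny: "(s,y) \<notin> (rr E (V-{x}))\<^sup>*" using assms by (auto simp: in_Dom)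
  then have sy: "s \<noteq> y" by auto
  have sx: "s \<noteq> x" using False by auto
  from reach_FV[OF reach[OF assms(1)] sx] show ?thesis
  proof
    assume "(s, x) \<in> (rr E (V - {x}))\<^sup>*"
    then show ?thesis using reach_out False by fastforce
  next
    assume "\<exists>u. (s, u) \<in> (rr E (V - {x}))\<^sup>* \<and> (u, x) \<in> rr E V"
    then obtain u where u: "(s, u) \<in> (rr E (V - {x}))\<^sup>*" "(u, x) \<in> rr E V" by blast
    from reach_FV[OF u(1) sy] show ?thesis
    proof
      assume h: "(s, u) \<in> (rr E (V - {x} - {y}))\<^sup>*"
      then have "(s, u) \<in> (rr E (V - {y}))\<^sup>*" by (rule reach_mono) auto
      moreover have "u \<noteq> y" using reach_out[OF h] sy by auto
      moreover have "(u,x) \<in> rr E (V-{y})" using u(2) \<open>u \<noteq> y\<close> assms(3) by auto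
      ultimately show ?thesis by (meson rtrancl.rtrancl_into_rtrancl)
    next
      assume "\<exists>u'. (s, u') \<in> (rr E (V - {x} - {y}))\<^sup>* \<and> (u', y) \<in> rr E (V - {x})"
      then obtain u' where "(s, u') \<in> (rr E (V - {x} - {y}))\<^sup>*" "(u', y) \<in> rr E (V - {x})" by blast
      then have "(s,y) \<in> (rr E (V-{x}))\<^sup>*"
        by (meson Diff_subset reach_mono rtrancl.rtrancl_into_rtrancl)
      with ny show ?thesis by simp
    qed
  qed
qed

lemma DomClose:
  assumes "(w,v) \<in> (rr E T)\<^sup>*" "T \<subseteq> V - {x}" "v \<in> Dom x" "v \<noteq> x" "w \<in> V"
  shows "w \<in> Dom x"
proof (rule ccontr)
  assume "w \<notin> Dom x"
  then have "(s,w) \<in> (rr E (V-{x}))\<^sup>*" using assms(5) by (auto simp: in_Dom)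
  moreover have "(w,v) \<in> (rr E (V-{x}))\<^sup>*" using assms(1,2) by (rule reach_mono)
  ultimately have "(s,v) \<in> (rr E (V-{x}))\<^sup>*" by auto
  with assms(3,4) show False by (auto simp: in_Dom)
qed

lemma DomCloseR:
  assumes "(w,v) \<in> (rr E T)\<^sup>*" "T \<subseteq> V - {x}" "v \<in> Dom x" "v \<noteq> x"
  shows "(w,v) \<in> (rr E (T \<inter> Dom x))\<^sup>*"
  using assms(1)
proof (induct rule: converse_rtrancl_induct)
  case base then show ?case by simp
next
  case (step a a')
  have "a \<in> T" "a' \<in> T" using step by auto
  have "a' \<in> Dom x" using DomClose[OF step(2) assms(2-4)] \<open>a' \<in> T\<close> assms(2) by auto
  moreover have "a \<in> Dom x"
    using DomClose[OF converse_rtrancl_into_rtrancl[OF step(1,2)] assms(2-4)] \<open>a \<in> T\<close> assms(2) by auto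
  ultimately have "(a,a') \<in> rr E (T \<inter> Dom x)" using step \<open>a \<in> T\<close> \<open>a' \<in> T\<close> by auto
  then show ?case using step(3) by (meson converse_rtrancl_into_rtrancl)
qed

definition Nbr where
  "Nbr x c \<longleftrightarrow> c \<in> Dom x \<and> c \<noteq> x \<and> (x,c) \<in> E \<and> (\<forall>w. (x,w) \<in> E \<and> w \<in> Dom x \<longrightarrow> w = c)"

lemma chain:
  assumes "Nbr x c" "x \<in> V"
  shows "Dom x - {x} \<subseteq> Dom c"
proof
  fix v assume v: "v \<in> Dom x - {x}"
  show "v \<in> Dom c"
  proof (rule ccontr)
    assume nv: "v \<notin> Dom c"
    have vV: "v \<in> V" using v Dom_V by auto
    with nv have r: "(s,v) \<in> (rr E (V-{c}))\<^sup>*" "v \<noteq> c" by (auto simp: in_Dom)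
    have vx: "v \<noteq> x" using v by auto
    from reach_LV[OF r(1) vx] show False
    proof
      assume "(s, v) \<in> (rr E (V - {c} - {x}))\<^sup>*"
      then have "(s, v) \<in> (rr E (V - {x}))\<^sup>*" by (rule reach_mono) auto
      with v show False by (auto simp: in_Dom)
    next
      assume "\<exists>w. (x, w) \<in> rr E (V - {c}) \<and> (w, v) \<in> (rr E (V - {c} - {x}))\<^sup>*"
      then obtain w where w: "(x, w) \<in> rr E (V - {c})" "(w, v) \<in> (rr E (V - {c} - {x}))\<^sup>*" by blast
      have "w \<in> Dom x" using DomClose[OF w(2), of x] v w(1) by auto
      then show False using assms(1) w(1) unfolding Nbr_def by auto
    qed
  qed
qed

lemma TreeNoBack:
  assumes T: "out_branching D s T" and uw: "(u,w) \<in> T" and ud: "u \<in> Dom w" and ne: "u \<noteq> w"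
  shows False
proof -
  have TE: "T \<subseteq> E" and root: "\<forall>u. (u,s) \<notin> T"
    and uniq: "\<forall>v\<in>V. v \<noteq> s \<longrightarrow> (\<exists>!u. (u, v) \<in> T)"
    and pth: "\<forall>v\<in>V. \<exists>p. dpath (V, T) p s v" using T by (auto simp: out_branching_def)
  have ws: "w \<noteq> s" using root uw by auto
  have uV: "u \<in> V" "w \<in> V" using uw TE EV by auto
  obtain p where p: "dpath (V, T) p s u" using pth uV by auto
  have wp: "w \<in> set p"
  proof (rule ccontr)
    assume "w \<notin> set p"
    have "(s,u) \<in> (rr T (set p))\<^sup>*" using dpath_P2RT[OF p] by simp
    moreover have "set p \<subseteq> V - {w}" using p \<open>w \<notin> set p\<close> by (auto simp: dpath_def)
    ultimately have "(s,u) \<in> (rr E (V-{w}))\<^sup>*" using reach_monoE[OF _ TE] by blast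
    with ud ne show False by (auto simp: in_Dom)
  qed
  then obtain a where a: "a < length p" "p!a = w" by (auto simp: in_set_conv_nth)
  have pd: "p \<noteq> []" "hd p = s" "last p = u" "distinct p"
    "\<forall>i. Suc i < length p \<longrightarrow> (p ! i, p ! Suc i) \<in> T" using p by (auto simp: dpath_def)
  have "a \<noteq> 0"
  proof
    assume "a = 0" then show False using a pd ws by (simp add: hd_conv_nth)
  qed
  then have "(p!(a-1), w) \<in> T" using pd(5) a by (metis Suc_pred' gr0I)
  moreover have ex: "\<exists>!u. (u,w) \<in> T" using uniq uV ws by blast
  ultimately have "p!(a-1) = u" using uw by (metis ex1_implies_ex ex)
  moreover have "u = p!(length p - 1)" using pd by (simp add: last_conv_nth)
  ultimately have "a - 1 = length p - 1" using pd(4) a by (simp add: nth_eq_iff_index_eq)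
  then show False using a \<open>a \<noteq> 0\<close> by simp
qed

end


lemma last_filter_at:
  assumes "k < length p" "p!k = y" "P y" "\<forall>m. k < m \<and> m < length p \<longrightarrow> \<not> P (p!m)"
  shows "last (filter P p) = y"
proof -
  have p: "p = take k p @ [p!k] @ drop (Suc k) p" using assms(1) by (simp add: id_take_nth_drop)
  have "filter P (drop (Suc k) p) = []"
    using assms(4) by (auto simp: filter_empty_conv in_set_conv_nth)
  then have "filter P p = filter P (take k p) @ [y]"
    using assms(2,3) by (subst p) simp
  then show ?thesis by simp
qed

context sett begin

lemma dib_sub:
  assumes "x \<in> V" "z \<in> diblock (induced D (Dom x)) x"
  shows "z \<in> Dom x"
  using assms unfolding diblock_def bireachable_def induced_rr
  by (auto simp: dpath_def in_Dom)

lemma dib_reach: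
  assumes "x \<in> V" "z \<in> diblock (induced D (Dom x)) x" "y \<noteq> z" "y \<noteq> x"
  shows "(x,z) \<in> (rr E (V-{y}))\<^sup>*"
proof -
  let ?H = "induced D (Dom x)"
  have aH: "arcs ?H \<subseteq> E" and vH: "verts ?H \<subseteq> V" using Dom_V by (auto simp: induced_rr rr_def)
  consider "z = x" | "(x,z) \<in> arcs ?H" | "bireachable ?H x z"
    using assms(2) unfolding diblock_def by auto
  then show ?thesis
  proof cases
    case 1 then show ?thesis by simp
  next
    case 2 then show ?thesis using assms Dom_V by (auto simp: induced_rr in_Dom intro!: r_into_rtrancl)
  next
    case 3
    then obtain p q where pq: "dpath ?H p x z" "dpath ?H q x z" "set p \<inter> set q \<subseteq> {x, z}"
      unfolding bireachable_def by blast
    have "y \<notin> set p \<or> y \<notin> set q" using pq(3) assms(3,4) by auto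
    then obtain r where r: "dpath ?H r x z" "y \<notin> set r" using pq by blast
    have "set r \<subseteq> V - {y}" using r vH by (auto simp: dpath_def)
    then show ?thesis using reach_monoE[OF dpath_P2RT[OF r(1)] aH] by blast
  qed
qed

lemma XD:
  assumes xV: "x \<in> V" and yB: "y \<in> diblock (induced D (Dom x)) x" and yx: "y \<noteq> x"
  shows "Xset (induced D (Dom x)) x y \<union> {y} = Dom y"
proof -
  let ?H = "induced D (Dom x)"
  let ?B = "diblock ?H x"
  have vH: "verts ?H = Dom x" and aH: "arcs ?H = rr E (Dom x)" by (auto simp: induced_rr)
  have aHE: "arcs ?H \<subseteq> E" by (auto simp: induced_rr rr_def)
  have yD: "y \<in> Dom x" using dib_sub[OF xV yB] .
  have xB: "x \<in> ?B" by (auto simp: diblock_def)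
  have xD: "x \<in> Dom x" using xV by (auto simp: in_Dom)
  have rx: "(s,x) \<in> (rr E (V-{y}))\<^sup>*" using RX[OF xV yD yx] .
  show ?thesis
  proof
    show "Xset ?H x y \<union> {y} \<subseteq> Dom y"
    proof
      fix v assume v: "v \<in> Xset ?H x y \<union> {y}"
      show "v \<in> Dom y"
      proof (cases "v = y")
        case True then show ?thesis using yD Dom_V by (auto simp: in_Dom)
      next
        case False
        then have vXs: "v \<in> Xset ?H x y" using v by blast
        then have "v \<in> verts ?H - ?B \<and> (\<forall>p. dpath ?H p x v \<longrightarrow> last (filter (\<lambda>z. z \<in> ?B) p) = y)"
          unfolding Xset_def by (rule CollectD)
        then have "v \<in> Dom x \<and> v \<notin> ?B \<and> (\<forall>p. dpath ?H p x v \<longrightarrow> last (filter (\<lambda>z. z \<in> ?B) p) = y)"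
          unfolding vH Diff_iff conj_assoc .
        then have vX: "v \<in> Dom x" "v \<notin> ?B"
          and vP: "\<forall>p. dpath ?H p x v \<longrightarrow> last (filter (\<lambda>z. z \<in> ?B) p) = y"
          by blast+
        have vx: "v \<noteq> x" using vX xB by auto
        show ?thesis
        proof (rule ccontr)
          assume "v \<notin> Dom y"
          then have r: "(s,v) \<in> (rr E (V-{y}))\<^sup>*" using vX Dom_V by (auto simp: in_Dom)
          from reach_LV[OF r vx] show False
          proof
            assume "(s, v) \<in> (rr E (V - {y} - {x}))\<^sup>*"
            then have "(s, v) \<in> (rr E (V - {x}))\<^sup>*" by (rule reach_mono) auto
            then show False using vX vx by (auto simp: in_Dom)
          next
            assume "\<exists>w. (x, w) \<in> rr E (V - {y}) \<and> (w, v) \<in> (rr E (V - {y} - {x}))\<^sup>*"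
            then obtain w where w: "(x, w) \<in> rr E (V - {y})" "(w, v) \<in> (rr E (V - {y} - {x}))\<^sup>*"
              by blast
            have T: "V - {y} - {x} \<subseteq> V - {x}" by auto
            have wv: "(w,v) \<in> (rr E ((V - {y} - {x}) \<inter> Dom x))\<^sup>*"
              using DomCloseR[OF w(2) T vX(1) vx] .
            have wx: "w \<noteq> x" using w(1) noloop by auto
            have wD: "w \<in> Dom x" using DomClose[OF w(2) T vX(1) vx] w(1) by auto
            let ?S = "((V - {y} - {x}) \<inter> Dom x) \<union> {x}"
            have "(x,w) \<in> rr E ?S" using w(1) wx wD by auto
            moreover have "(w,v) \<in> (rr E ?S)\<^sup>*" using wv by (rule reach_mono) auto
            ultimately have "(x,v) \<in> (rr E ?S)\<^sup>*" by (meson converse_rtrancl_into_rtrancl)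
            moreover have "x \<in> ?S" by simp
            ultimately obtain p where p: "dpath (?S, rr E ?S) p x v" using dpath_RT2P by metis
            have SD: "?S \<subseteq> Dom x" using xD by auto
            have "rr E ?S \<subseteq> rr E (Dom x)" using SD by (auto simp: rr_def)
            then have pH: "dpath ?H p x v" using dpath_mono[OF p] SD vH aH by auto
            have yp: "y \<notin> set p" using p yx by (auto simp: dpath_def)
            have "x \<in> set (filter (\<lambda>z. z \<in> ?B) p)" using p xB by (auto simp: dpath_def)
            then have "filter (\<lambda>z. z \<in> ?B) p \<noteq> []" by (metis empty_iff empty_set)
            then have "last (filter (\<lambda>z. z \<in> ?B) p) \<in> set p" using last_in_set by fastforce
            then show False using vP pH yp by auto
          qed
        qed
      qed
    qed
  next
    show "Dom y \<subseteq> Xset ?H x y \<union> {y}"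
    proof
      fix v assume vy: "v \<in> Dom y"
      show "v \<in> Xset ?H x y \<union> {y}"
      proof (cases "v = y")
        case True then show ?thesis by simp
      next
        case False
        have vD: "v \<in> Dom x" using Dom_trans[OF yD] vy by auto
        have ny: "(s,v) \<notin> (rr E (V-{y}))\<^sup>*" using vy False by (auto simp: in_Dom)
        have nxv: "(x,v) \<notin> (rr E (V-{y}))\<^sup>*" using ny rx by (meson rtrancl_trans)
        have vB: "v \<notin> ?B"
        proof
          assume "v \<in> ?B"
          then have "(x,v) \<in> (rr E (V-{y}))\<^sup>*" using dib_reach[OF xV _ _ yx] False by blast
          with nxv show False by simp
        qed
        have "\<forall>p. dpath ?H p x v \<longrightarrow> last (filter (\<lambda>z. z \<in> ?B) p) = y"
        proof (intro allI impI)
          fix p assume p: "dpath ?H p x v"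
          have pd: "distinct p" "set p \<subseteq> Dom x" using p vH by (auto simp: dpath_def)
          have yp: "y \<in> set p"
          proof (rule ccontr)
            assume "y \<notin> set p"
            then have "set p \<subseteq> V - {y}" using pd Dom_V by auto
            then have "(x,v) \<in> (rr E (V-{y}))\<^sup>*"
              using reach_monoE[OF dpath_P2RT[OF p] aHE] by blast
            then show False using nxv by simp
          qed
          then obtain k where k: "k < length p" "p!k = y" by (auto simp: in_set_conv_nth)
          have "\<forall>m. k < m \<and> m < length p \<longrightarrow> p!m \<notin> ?B"
          proof (intro allI impI)
            fix m assume m: "k < m \<and> m < length p"
            show "p!m \<notin> ?B"
            proof
              assume mB: "p!m \<in> ?B"
              have my: "p!m \<noteq> y" using m k pd(1) by (metis nat_neq_iff nth_eq_iff_index_eq)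
              have r1: "(x, p!m) \<in> (rr E (V-{y}))\<^sup>*" using dib_reach[OF xV mB my[symmetric] yx] .
              have dp: "dpath ?H (drop m p) (p!m) v" using dpath_drop[OF p] m by auto
              have "y \<notin> set (drop m p)"
              proof
                assume "y \<in> set (drop m p)"
                then obtain j where "j < length (drop m p)" "drop m p ! j = y" by (auto simp: in_set_conv_nth)
                then have "p!(m+j) = y" "m + j < length p" by auto
                then show False using k m pd(1) by (metis add_lessD1 less_not_refl nth_eq_iff_index_eq
                      not_add_less1)
              qed
              then have "set (drop m p) \<subseteq> V - {y}" using pd Dom_V set_drop_subset by fastforce
              then have "(p!m, v) \<in> (rr E (V-{y}))\<^sup>*"
                using reach_monoE[OF dpath_P2RT[OF dp] aHE] by blast
              then show False using r1 nxv by (meson rtrancl_trans)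
            qed
          qed
          then show "last (filter (\<lambda>z. z \<in> ?B) p) = y"
            using last_filter_at[OF k, of "\<lambda>z. z \<in> ?B"] yB by auto
        qed
        then have "v \<in> Xset ?H x y" unfolding Xset_def using vD vB vH by (simp only: mem_Collect_eq Diff_iff) simp
        then show ?thesis by blast
      qed
    qed
  qed
qed

lemma induced_V: "induced D V = D"
  using wf by (cases D) (auto simp: induced_def wf_digraph_def)

lemma inv: "cd_node D s x H \<Longrightarrow> x \<in> V \<and> H = induced D (Dom x)"
proof (induct rule: cd_node.induct)
  case root then show ?case using sV Dom_s induced_V by simp
next
  case (child x H y)
  then have xV: "x \<in> V" and H: "H = induced D (Dom x)" by auto
  have yB: "y \<in> diblock H x" "y \<noteq> x" using child(3) by (auto simp: bottleneck_def)
  have yD: "y \<in> Dom x" using dib_sub[OF xV] yB H by auto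
  have "Xset H x y \<union> {y} = Dom y" using XD[OF xV] yB H by auto
  moreover have "Dom y \<subseteq> Dom x" using Dom_trans[OF yD] .
  ultimately have "induced H (Xset H x y \<union> {y}) = induced D (Dom y)"
    using H by (auto simp: induced_rr rr_def)
  then show ?case using yD Dom_V by auto
qed

lemma deg:
  assumes "cd_node D s x H" "bottleneck H x y" "card (diblock H x) = 2"
  shows "Nbr x y"
proof -
  have xV: "x \<in> V" and H: "H = induced D (Dom x)" using inv[OF assms(1)] by auto
  have yB: "y \<in> diblock H x" "y \<noteq> x" using assms(2) by (auto simp: bottleneck_def)
  have xB: "x \<in> diblock H x" by (auto simp: diblock_def)
  have B2: "diblock H x = {x, y}"
  proof -
    have "finite (diblock H x)" using assms(3) card.infinite by fastforce
    moreover have "{x,y} \<subseteq> diblock H x" using xB yB by auto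
    moreover have "card {x,y} = 2" using yB by auto
    ultimately show ?thesis using assms(3) by (metis card_subset_eq)
  qed
  have nb: "\<And>w. (x,w) \<in> arcs H \<Longrightarrow> w = y"
  proof -
    fix w assume "(x,w) \<in> arcs H"
    then have "w \<in> diblock H x" "w \<noteq> x" using noloop H by (auto simp: diblock_def induced_rr)
    then show "w = y" using B2 by auto
  qed
  have xy: "(x,y) \<in> arcs H"
  proof -
    consider "(x,y) \<in> arcs H" | "bireachable H x y" using yB unfolding diblock_def by auto
    then show ?thesis
    proof cases
      case 2
      then obtain p where p: "dpath H p x y" unfolding bireachable_def by blast
      have "length p \<noteq> 1" using p yB(2) by (auto simp: dpath_def last_conv_nth hd_conv_nth)
      then have "Suc 0 < length p" using p by (cases p) (auto simp: dpath_def)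
      then have "(p!0, p!1) \<in> arcs H" using p by (auto simp: dpath_def)
      moreover have "p!0 = x" using p by (auto simp: dpath_def hd_conv_nth)
      ultimately show ?thesis using nb by auto
    qed simp
  qed
  show ?thesis unfolding Nbr_def using xy nb H yB by (auto simp: induced_rr)
qed

end


lemma inbr_exists:
  assumes GE: "G \<subseteq> arcs D" and EV: "arcs D \<subseteq> verts D \<times> verts D" and tV: "t \<in> verts D"
    and R: "\<forall>v\<in>verts D. (v,t) \<in> G\<^sup>*"
  shows "\<exists>T. T \<subseteq> G \<and> in_branching D t T"
proof -
  define dist where "dist v = (LEAST n. (v,t) \<in> G ^^ n)" for v
  have dok: "(v,t) \<in> G ^^ dist v" if "v \<in> verts D" for v
  proof -
    have "\<exists>n. (v,t) \<in> G ^^ n" using R that rtrancl_power by blast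
    then show ?thesis unfolding dist_def by (rule LeastI_ex)
  qed
  have stp: "\<exists>w. (v,w) \<in> G \<and> dist w < dist v" if "v \<in> verts D" "v \<noteq> t" for v
  proof -
    have h: "(v,t) \<in> G ^^ dist v" using dok that by blast
    have "dist v \<noteq> 0"
    proof
      assume "dist v = 0" then show False using h that by simp
    qed
    then obtain m where m: "dist v = Suc m" by (cases "dist v") auto
    then obtain w where w: "(v,w) \<in> G" "(w,t) \<in> G ^^ m" using h relpow_Suc_D2 by metis
    have "dist w \<le> m" unfolding dist_def using w(2) by (rule Least_le)
    then show ?thesis using w m by auto
  qed
  define nx where "nx v = (SOME w. (v,w) \<in> G \<and> dist w < dist v)" for v
  have nxp: "(v, nx v) \<in> G \<and> dist (nx v) < dist v" if "v \<in> verts D" "v \<noteq> t" for v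
    unfolding nx_def using stp[OF that] by (rule someI_ex)
  define T where "T = {(v, nx v) | v. v \<in> verts D \<and> v \<noteq> t}"
  have TG: "T \<subseteq> G" using nxp by (auto simp: T_def)
  have TV: "T \<subseteq> verts D \<times> verts D" using TG GE EV by auto
  have paths: "\<forall>v. v \<in> verts D \<and> dist v = n \<longrightarrow> (\<exists>p. dpath (verts D, T) p v t \<and> (\<forall>u\<in>set p. dist u \<le> dist v))" for n
  proof (induct n rule: less_induct)
    case (less n)
    show ?case
    proof (intro allI impI)
      fix v assume v: "v \<in> verts D \<and> dist v = n"
      show "\<exists>p. dpath (verts D, T) p v t \<and> (\<forall>u\<in>set p. dist u \<le> dist v)"
      proof (cases "v = t")
        case True
        then show ?thesis using tV by (auto simp: dpath_def)
      next
        case False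
        have w: "(v, nx v) \<in> G" "dist (nx v) < dist v" using nxp v False by auto
        have wV: "nx v \<in> verts D" using w GE EV by auto
        obtain p where p: "dpath (verts D, T) p (nx v) t" "\<forall>u\<in>set p. dist u \<le> dist (nx v)"
          using less[rule_format, of "dist (nx v)" "nx v"] w v wV by auto
        have "v \<notin> set p" using p(2) w(2) by fastforce
        moreover have "(v, nx v) \<in> T" using v False by (auto simp: T_def)
        ultimately have "dpath (verts D, T) (v#p) v t" using dpath_Cons[OF p(1)] v by auto
        then show ?thesis using p(2) w(2) by fastforce
      qed
    qed
  qed
  have "in_branching D t T"
    unfolding in_branching_def
  proof (intro conjI ballI impI allI)
    show "t \<in> verts D" by fact
    show "T \<subseteq> arcs D" using TG GE by auto
    fix u show "(t,u) \<notin> T" by (auto simp: T_def)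
  next
    fix v assume "v \<in> verts D" "v \<noteq> t"
    then show "\<exists>!u. (v,u) \<in> T" by (auto simp: T_def)
  next
    fix v assume "v \<in> verts D"
    then show "\<exists>p. dpath (verts D, T) p v t" using paths by blast
  qed
  then show ?thesis using TG by blast
qed



context sett begin
lemma ex1_uniq: "\<exists>!z. P z \<Longrightarrow> P a \<Longrightarrow> P b \<Longrightarrow> a = b" by blast
lemma red1: "reduced_instance D s t k \<Longrightarrow> \<exists>T. out_branching D s T"
  unfolding reduced_instance_def by (elim conjE)
lemma red2: "reduced_instance D s t k \<Longrightarrow> \<exists>T. in_branching D t T"
  unfolding reduced_instance_def by (elim conjE)
lemma red3: "reduced_instance D s t k \<Longrightarrow> a \<in> E \<Longrightarrow> (\<exists>T. out_branching D s T \<and> a \<in> T) \<or> (\<exists>T. in_branching D t T \<and> a \<in> T)"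
  unfolding reduced_instance_def by (elim conjE) (rule bspec)
lemma ob1: "out_branching D s T \<Longrightarrow> T \<subseteq> E"
  unfolding out_branching_def by (elim conjE)
lemma ob2: "out_branching D s T \<Longrightarrow> v \<in> V \<Longrightarrow> v \<noteq> s \<Longrightarrow> \<exists>!u. (u,v) \<in> T"
  unfolding out_branching_def by (elim conjE) blast
lemma ib1: "in_branching D t T \<Longrightarrow> T \<subseteq> E"
  unfolding in_branching_def by (elim conjE)
lemma ib2: "in_branching D t T \<Longrightarrow> v \<in> V \<Longrightarrow> \<exists>p. dpath (V,T) p v t"
  unfolding in_branching_def by (elim conjE) blast
lemma ib3: "in_branching D t T \<Longrightarrow> v \<in> V \<Longrightarrow> v \<noteq> t \<Longrightarrow> \<exists>!u. (v,u) \<in> T"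
  unfolding in_branching_def by (elim conjE) blast
lemma dg1: "degenerate_path D s xs \<Longrightarrow> Suc i < length xs \<Longrightarrow> cd_child D s (xs!i) (xs!Suc i)"
  unfolding degenerate_path_def by (elim conjE) blast
lemma dg2: "degenerate_path D s xs \<Longrightarrow> i < length xs \<Longrightarrow> cd_degenerate D s (xs!i)"
  unfolding degenerate_path_def by (elim conjE) blast
lemma A0: "u \<in> A0_tails D xs \<Longrightarrow> \<exists>j<length xs. u = xs!j \<and> (\<exists>i<j. (xs!j, xs!i) \<in> E)"
  unfolding A0_tails_def by blast
lemma A0fin: "A0_tails D xs \<subseteq> set xs"
  unfolding A0_tails_def by auto
lemma toT3: assumes q: "dpath (V, Tm0) q v t" "Tm0 \<subseteq> E" shows "(v,t) \<in> E\<^sup>*"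
proof -
    have sub: "rr Tm0 (set q) \<subseteq> E" using q(2) unfolding rr_def by blast
    have "(v,t) \<in> (rr Tm0 (set q))\<^sup>*" using dpath_P2RT[OF q(1)] by simp
    then show "(v,t) \<in> E\<^sup>*" using rtrancl_mono[OF sub] by blast
qed
lemma finE: "finite E" 
proof -
  have EVV: "E \<subseteq> V \<times> V" and finV: "finite V" using wf unfolding wf_digraph_def by blast+
  show "finite E" using finite_subset[OF EVV finite_cartesian_product[OF finV finV]] .
qed
end


context sett begin
lemma main:
  assumes tV: "t \<in> V"
    and red: "reduced_instance D s t k"
    and dp: "degenerate_path D s xs"
    and txs: "t \<notin> set xs"
    and np: "\<not> positive_instance D s t k"
  shows "int (card (A0_tails D xs)) < k"
proof (rule ccontr)
  assume ck: "\<not> int (card (A0_tails D xs)) < k"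
  let ?Y = "A0_tails D xs"
  let ?l = "length xs"
  define x where "x i = xs ! i" for i
  obtain Tp0 where Tp0: "out_branching D s Tp0" using red1[OF red] by blast
  obtain Tm0 where Tm0: "in_branching D t Tm0" using red2[OF red] by blast
  have ETp: "Tp0 \<subseteq> E" using ob1[OF Tp0] .
  have toT: "(v,t) \<in> E\<^sup>*" if vV: "v \<in> V" for v
  proof -
    obtain q where q: "dpath (V, Tm0) q v t" using ib2[OF Tm0 vV] by blast
    then show ?thesis using toT3 ib1[OF Tm0] by blast
  qed
  have dpd: "\<forall>i. Suc i < ?l \<longrightarrow> cd_child D s (x i) (x (Suc i))" "\<forall>i < ?l. cd_degenerate D s (x i)"
    using dg1[OF dp] dg2[OF dp] unfolding x_def by blast+
  have nb: "x i \<in> V \<and> (\<exists>c. Nbr (x i) c)" if iL: "i < ?l" for i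
  proof -
    obtain H y where H: "cd_node D s (x i) H" "bottleneck H (x i) y" "card (diblock H (x i)) = 2"
      using dpd(2) iL unfolding cd_degenerate_def by (meson Suc_lessD)
    have "Nbr (x i) y" using deg[OF H] .
    moreover have "x i \<in> V" using inv[OF H(1)] by simp
    ultimately show ?thesis by blast
  qed
  have nbs: "Nbr (x i) (x (Suc i))" if iL: "Suc i < ?l" for i
  proof -
    obtain H y where H: "cd_node D s (x i) H" "bottleneck H (x i) y" "card (diblock H (x i)) = 2"
      using dpd(2) iL unfolding cd_degenerate_def by (meson Suc_lessD)
    obtain G where G: "cd_node D s (x i) G" "bottleneck G (x i) (x (Suc i))"
      using dpd(1) iL unfolding cd_child_def by blast
    have "G = H" using inv[OF G(1)] inv[OF H(1)] by simp
    then show ?thesis using deg[OF H(1) _ H(3)] G(2) by simp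
  qed
  have xin: "x j \<in> Dom (x j)" if "j < ?l" for j using nb[OF that] by (auto simp: in_Dom)
  have dchain: "Dom (x (i + d)) \<subseteq> Dom (x i)" if "i + d < ?l" for i d
    using that
  proof (induct d)
    case 0 then show ?case by simp
  next
    case (Suc d)
    have "x (Suc (i+d)) \<in> Dom (x (i+d))" using nbs[of "i+d"] Suc(2) by (auto simp: Nbr_def)
    then have "Dom (x (Suc (i+d))) \<subseteq> Dom (x (i+d))" by (rule Dom_trans)
    then show ?case using Suc by auto
  qed
  have dch: "Dom (x j) \<subseteq> Dom (x i)" if "i \<le> j" "j < ?l" for i j
    using dchain[of i "j - i"] that by auto
  have notdom: "x i \<notin> Dom (x j)" if "i < j" "j < ?l" for i j
  proof
    assume a: "x i \<in> Dom (x j)"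
    have N: "Nbr (x i) (x (Suc i))" using nbs that by auto
    have r: "(s, x i) \<in> (rr E (V - {x (Suc i)}))\<^sup>*"
      using RX[of "x i" "x (Suc i)"] N nb[of i] that by (auto simp: Nbr_def)
    have "x i \<in> Dom (x (Suc i))" using a dch[of "Suc i" j] that by auto
    then show False using r N by (auto simp: in_Dom Nbr_def)
  qed
  have Yx: "\<exists>j<?l. u = x j \<and> (\<exists>i<j. (x j, x i) \<in> E)" if "u \<in> ?Y" for u
    using A0[OF that] unfolding x_def by blast
  define F where "F = {(u,w) \<in> E. u \<in> ?Y \<and> w \<in> Dom u}"
  have FTp: "F \<subseteq> Tp0"
  proof
    fix a assume "a \<in> F"
    then obtain u w where a: "a = (u,w)" "(u,w) \<in> E" "u \<in> ?Y" "w \<in> Dom u" by (auto simp: F_def)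
    obtain j where j: "j < ?l" "u = x j" using Yx[OF a(3)] by blast
    obtain c where c: "Nbr u c" using nb j by blast
    have uV: "u \<in> V" using nb j by auto
    have wc: "w = c" using c a unfolding Nbr_def by blast
    have wu: "w \<noteq> u" using c wc by (auto simp: Nbr_def)
    have ws: "w \<noteq> s" using a(4) wu by (auto simp: in_Dom)
    have wV: "w \<in> V" using a EV by auto
    obtain u' where u': "(u',w) \<in> Tp0" using ob2[OF Tp0 wV ws] by blast
    show "a \<in> Tp0"
    proof (cases "u' = u")
      case True then show ?thesis using u' a by simp
    next
      case False
      have u'E: "(u',w) \<in> E" using u' ETp by auto
      have "u' \<in> Dom u"
      proof (rule ccontr)
        assume "u' \<notin> Dom u"
        then have "w = u" using EP[OF u'E] a(4) by blast
        then show False using wu by simp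
      qed
      then have "u' \<in> Dom c" using chain[OF c uV] False by auto
      moreover have "u' \<noteq> w" using u'E noloop by auto
      ultimately show ?thesis using TreeNoBack[OF Tp0 u'] wc by auto
    qed
  qed
  have badarc: "(u,w) \<in> F" if "(u,w) \<in> E" "(u,t) \<notin> (E - F)\<^sup>*" "(w,t) \<in> (E - F)\<^sup>*" for u w
  proof (rule ccontr)
    assume "(u,w) \<notin> F"
    then have "(u,w) \<in> E - F" using that by auto
    then show False using that by (meson converse_rtrancl_into_rtrancl)
  qed
  have reachF: "\<forall>v\<in>V. (v,t) \<in> (E - F)\<^sup>*"
  proof (rule ccontr)
    assume "\<not> (\<forall>v\<in>V. (v,t) \<in> (E - F)\<^sup>*)"
    then obtain v0 where v0: "v0 \<in> V" "(v0,t) \<notin> (E - F)\<^sup>*" by blast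
    obtain u w where uw: "(u,w) \<in> E" "(u,t) \<notin> (E - F)\<^sup>*" "(w,t) \<in> (E - F)\<^sup>*"
      using reach_leave[OF toT[OF v0(1)], of "\<lambda>z. (z,t) \<notin> (E - F)\<^sup>*"] v0 by auto
    have "u \<in> ?Y" using badarc[OF uw] by (auto simp: F_def)
    define J where "J = {j. j < ?l \<and> (\<exists>i<j. (x j, x i) \<in> E) \<and> (x j, t) \<notin> (E - F)\<^sup>*}"
    have "J \<noteq> {}" using Yx[OF \<open>u \<in> ?Y\<close>] uw(2) by (auto simp: J_def)
    then obtain jj where "jj \<in> J" by blast
    define j0 where "j0 = (LEAST j. j \<in> J)"
    have j0: "j0 \<in> J" "\<And>j. j \<in> J \<Longrightarrow> j0 \<le> j"
      unfolding j0_def using LeastI[of "\<lambda>j. j \<in> J", OF \<open>jj \<in> J\<close>] Least_le[of "\<lambda>j. j \<in> J"] by auto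
    from j0(1) obtain i0 where i0: "i0 < j0" "j0 < ?l" "(x j0, x i0) \<in> E" "(x j0, t) \<notin> (E - F)\<^sup>*"
      by (auto simp: J_def)
    have jD: "x j0 \<in> Dom (x i0)" using xin[of j0] dch[of i0 j0] i0 by auto
    have ji: "x j0 \<noteq> x i0" using notdom[of i0 j0] xin[of j0] i0 by auto
    have nout: "\<not> (\<exists>T. out_branching D s T \<and> (x j0, x i0) \<in> T)"
    proof
      assume "\<exists>T. out_branching D s T \<and> (x j0, x i0) \<in> T"
      then obtain T where "out_branching D s T" "(x j0, x i0) \<in> T" by blast
      then show False using TreeNoBack jD ji by blast
    qed
    have "(\<exists>T. out_branching D s T \<and> (x j0, x i0) \<in> T) \<or> (\<exists>T. in_branching D t T \<and> (x j0, x i0) \<in> T)"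
      using red3[OF red i0(3)] .
    then obtain Tm' where Tm': "in_branching D t Tm'" "(x j0, x i0) \<in> Tm'"
      using nout by blast
    have jV: "x j0 \<in> V" using nb i0 by auto
    have jt: "x j0 \<noteq> t" using txs i0 nth_mem unfolding x_def by metis
    obtain q where q: "dpath (V, Tm') q (x j0) t" using ib2[OF Tm'(1) jV] by blast
    have qd: "q \<noteq> []" "hd q = x j0" "last q = t" "distinct q" "set q \<subseteq> V"
      "\<forall>i. Suc i < length q \<longrightarrow> (q ! i, q ! Suc i) \<in> Tm'" using q by (auto simp: dpath_def)
    have q0: "q!0 = x j0" using qd by (simp add: hd_conv_nth)
    have lq: "Suc 0 < length q"
    proof (rule ccontr)
      assume "\<not> Suc 0 < length q"
      then have "length q = 1" using qd(1) by (cases q) auto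
      then show False using qd jt by (simp add: hd_conv_nth last_conv_nth)
    qed
    have "(q!0, q!1) \<in> Tm'" using qd(6) lq by auto
    then have a1: "(x j0, q!1) \<in> Tm'" using q0 by simp
    have q1: "q!1 = x i0" using ex1_uniq[OF ib3[OF Tm'(1) jV jt] a1 Tm'(2)] .
    have dq: "dpath (V, Tm') (drop 1 q) (x i0) t" using dpath_drop[OF q lq] q1 by simp
    have "x j0 \<notin> set (drop 1 q)"
    proof
      assume "x j0 \<in> set (drop 1 q)"
      then obtain m where "m < length (drop 1 q)" "drop 1 q ! m = x j0" by (auto simp: in_set_conv_nth)
      then have "q ! (Suc m) = q ! 0" "Suc m < length q" using q0 by auto
      then show False using nth_eq_iff_index_eq[OF qd(4), of "Suc m" 0] qd(1) by fastforce
    qed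
    then have "set (drop 1 q) \<subseteq> V - {x j0}" using qd(5) set_drop_subset by fastforce
    moreover have "Tm' \<subseteq> E" using ib1[OF Tm'(1)] .
    ultimately have it: "(x i0, t) \<in> (rr E (V - {x j0}))\<^sup>*"
      using reach_monoE[OF dpath_P2RT[OF dq]] by auto
    have nF: "(x j0, x i0) \<notin> F" using notdom[of i0 j0] i0 by (auto simp: F_def)
    have bi: "(x i0, t) \<notin> (E - F)\<^sup>*"
    proof
      assume "(x i0, t) \<in> (E - F)\<^sup>*"
      moreover have "(x j0, x i0) \<in> E - F" using nF i0 by auto
      ultimately show False using i0(4) by (meson converse_rtrancl_into_rtrancl)
    qed
    have "(t,t) \<in> (E - F)\<^sup>*" by simp
    obtain u2 w2 where uw2: "(x i0, u2) \<in> (rr E (V - {x j0}))\<^sup>*" "(u2,w2) \<in> rr E (V - {x j0})"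
      "(u2,t) \<notin> (E - F)\<^sup>*" "(w2,t) \<in> (E - F)\<^sup>*"
      using reach_leave[OF it, of "\<lambda>z. (z,t) \<notin> (E - F)\<^sup>*"] bi by auto
    have "(u2,w2) \<in> F" using badarc[of u2 w2] uw2 by auto
    then have "u2 \<in> ?Y" by (auto simp: F_def)
    then obtain q' where q': "q' < ?l" "u2 = x q'" "\<exists>i<q'. (x q', x i) \<in> E" using Yx by blast
    have "q' \<in> J" using q' uw2(3) by (auto simp: J_def)
    then have "j0 \<le> q'" using j0(2) by auto
    then have "u2 \<in> Dom (x j0)" using xin[of q'] dch[of j0 q'] q' by auto
    moreover have "x i0 \<notin> Dom (x j0)" using notdom i0 by auto
    ultimately show False using entry_reach[OF uw2(1), of "x j0"] by auto
  qed
  obtain Tm where Tm: "Tm \<subseteq> E - F" "in_branching D t Tm"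
  proof -
    have EVV: "E \<subseteq> V \<times> V" using wf unfolding wf_digraph_def by blast
    have "E - F \<subseteq> E" by blast
    then show ?thesis using inbr_exists[OF _ EVV tV] reachF that by blast
  qed
  have bij: "bij_betw fst F ?Y"
    unfolding bij_betw_def
  proof
    show "inj_on fst F"
    proof (rule inj_onI)
      fix a b assume ab: "a \<in> F" "b \<in> F" "fst a = fst b"
      obtain u w where a: "a = (u,w)" "(u,w) \<in> E" "u \<in> ?Y" "w \<in> Dom u" using ab by (auto simp: F_def)
      obtain u' w' where b: "b = (u',w')" "(u',w') \<in> E" "u' \<in> ?Y" "w' \<in> Dom u'" using ab by (auto simp: F_def)
      obtain j where j: "j < ?l" "u = x j" using Yx[OF a(3)] by blast
      obtain c where c: "Nbr u c" using nb j by blast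
      have "u' = u" using ab a b by simp
      then have "w = c" "w' = c" using c a b unfolding Nbr_def by blast+
      then show "a = b" using a b \<open>u' = u\<close> by simp
    qed
  next
    show "fst ` F = ?Y"
    proof
      show "fst ` F \<subseteq> ?Y" by (auto simp: F_def)
      show "?Y \<subseteq> fst ` F"
      proof
        fix u assume u: "u \<in> ?Y"
        obtain j where j: "j < ?l" "u = x j" using Yx[OF u] by blast
        obtain c where c: "Nbr u c" using nb j by blast
        then have "(u,c) \<in> F" using u by (auto simp: F_def Nbr_def)
        then show "u \<in> fst ` F" by force
      qed
    qed
  qed
  have cF: "card F = card ?Y" using bij_betw_same_card[OF bij] .
  have "F \<subseteq> Tp0 - Tm" using FTp Tm(1) by auto
  moreover have "finite Tp0" using ETp finE by (rule finite_subset)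
  ultimately have "card F \<le> card (Tp0 - Tm)" by (simp add: card_mono)
  then have "int (card (Tp0 - Tm)) \<ge> k" using ck cF by linarith
  then have "positive_instance D s t k" using Tp0 Tm(2) unfolding positive_instance_def by blast
  then show False using np by simp
qed

end


theorem lemma17:
  fixes D :: "'a dg" and s t :: 'a and k :: int and xs :: "'a list"
  assumes "wf_digraph D" and "s \<in> verts D" and "t \<in> verts D"
    and "reduced_instance D s t k"
    and "degenerate_path D s xs"
    and "t \<notin> set xs"
    and "\<not> positive_instance D s t k"
  shows "int (card (A0_tails D xs)) < k"
proof -
  have "\<exists>T. out_branching D s T" using assms(4) unfolding reduced_instance_def by (elim conjE)
  then obtain T where T: "out_branching D s T" by blast
  have TE: "T \<subseteq> arcs D" using T unfolding out_branching_def by (elim conjE)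
  have reach: "(s,v) \<in> (rr (arcs D) (verts D))\<^sup>*" if v: "v \<in> verts D" for v
  proof -
    have "\<exists>p. dpath (verts D, T) p s v" using T v unfolding out_branching_def by (elim conjE) blast
    then obtain p where p: "dpath (verts D, T) p s v" by blast
    have sp: "set p \<subseteq> verts D" using p unfolding dpath_def by simp
    have "(s,v) \<in> (rr T (set p))\<^sup>*" using dpath_P2RT[OF p] by simp
    then show ?thesis using reach_monoE[OF _ TE sp] by blast
  qed
  interpret sett D s using assms(1,2) reach by unfold_locales
  show ?thesis using main[OF assms(3-7)] .
qed

end
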